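(* Let $\mathbb{F}$ be an algebraically closed field of characteristic $p>2$. Let $(V,[\cdot,\cdot]_V,\alpha_V,B_V)$ be an involutive quadratic Hom-Lie algebra over $\mathbb{F}$, $\mathscr{D}\in\mathrm{Der}_{\alpha_V}(V)$ such that $B_V$ is $\mathscr{D}$-invariant, and $x_0\in V$, $\lambda,\lambda_0\in\mathbb{F}$ with $\lambda\mathscr{D}+\mathrm{ad}_V(x_0)=\mathscr{D}$, $\alpha_V(\mathscr{D}(x_0))=-\mathscr{D}(x_0)$, $\alpha_V\circ\mathscr{D}^2-\mathscr{D}^2\circ\alpha_V=\mathrm{ad}_V(\mathscr{D}(x_0))$. Let $L=\mathbb{F}e^*\oplus V\oplus\mathbb{F}e$ with the skew-symmetric bilinear bracket $[x,y]=[x,y]_V+B_V(\mathscr{D}(x),y)e$, $[e^*,x]=-[x,e^*]=\mathscr{D}(x)$ ($x,y\in V$), $[e^*,e^*]=0$, $[e,z]=[z,e]=0$ ($z\in L$), and twist $\alpha(x)=\alpha_V(x)+B_V(x_0,x)e$, $\alpha(e^* )=\lambda e^*+x_0+\lambda_0e$, $\alpha(e)=\lambda e$. Then for all $u,v\in V$ and $1\le i\le p-1$, $s_i^L(u,v)=s_i^V(u,v)+\eta_i^V(u,v)e$.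
   Context: Hom-Lie algebra: $(\mathfrak g,[\cdot,\cdot],\alpha)$ with $[x,y]=-[y,x]$, $[\alpha(x),[y,z]]+[\alpha(y),[z,x]]+[\alpha(z),[x,y]]=0$, $\alpha([x,y])=[\alpha x,\alpha y]$; involutive: $\alpha^2=\mathrm{id}$; quadratic: symmetric nondegenerate bilinear $B$ with $B([x,y],z)=B(x,[y,z])$ and $B(\alpha x,y)=B(x,\alpha y)$. $\mathrm{Der}_{\alpha_V}(V)$: linear $\mathscr{D}$ with $\mathscr{D}\alpha_V=\alpha_V\mathscr{D}$, $\mathscr{D}[x,y]_V=[\mathscr{D}x,\alpha_Vy]_V+[\alpha_Vx,\mathscr{D}y]_V$. For $p>2$, $B_V$ is $\mathscr{D}$-invariant if $B_V(\mathscr{D}x,y)+B_V(x,\mathscr{D}y)=0$. For a Hom-Lie algebra $\mathfrak g$ with twist $\alpha$, the elements $s_i^{\mathfrak g}(x,y)$ ($1\le i\le p-1$) are defined by the polynomial identity in $k\in\mathbb{F}$: $\mathrm{ad}(\alpha^{p-2}(kx+y))\circ\mathrm{ad}(\alpha^{p-3}(kx+y))\circ\cdots\circ\mathrm{ad}(kx+y)(x)=\sum_{i=1}^{p-1}is_i^{\mathfrak g}(x,y)k^{i-1}$ (here $\mathrm{ad}(z)=[z,\cdot]$; $s_i^L$ uses $L$'s bracket and $\alpha$, $s_i^V$ uses $[\cdot,\cdot]_V,\alpha_V$). The scalars $\eta_i^V(u,v)$ are defined by $B_V\big(\mathscr{D}(\alpha_V^{p-2}(ku+v)),\mathrm{ad}_V(\alpha_V^{p-3}(ku+v))\circ\cdots\circ\mathrm{ad}_V(ku+v)(u)\big)=\sum_{i=1}^{p-1}i\eta_i^V(u,v)k^{i-1}$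 for all $k\in\mathbb{F}$. *)

theory Defs
  imports Main "HOL-Computational_Algebra.Polynomial" "HOL-Library.Product_Plus"
begin

fun hom_chain :: "('a \<Rightarrow> 'a \<Rightarrow> 'a) \<Rightarrow> ('a \<Rightarrow> 'a) \<Rightarrow> 'a \<Rightarrow> 'a \<Rightarrow> nat \<Rightarrow> 'a" where
  "hom_chain br al z x 0 = x"
| "hom_chain br al z x (Suc n) = br ((al ^^ n) z) (hom_chain br al z x n)"

definition poly_coeffs :: "('f::field \<Rightarrow> 'b::comm_monoid_add \<Rightarrow> 'b) \<Rightarrow> nat \<Rightarrow> ('f \<Rightarrow> 'b) \<Rightarrow> nat \<Rightarrow> 'b" where
  "poly_coeffs scale p F = (THE c. (\<forall>i. i \<notin> {1..p-1} \<longrightarrow> c i = 0) \<and>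
      (\<forall>k. F k = (\<Sum>i=1..p-1. scale (of_nat i * k ^ (i - 1)) (c i))))"

definition hom_s :: "('f::field \<Rightarrow> 'a::comm_monoid_add \<Rightarrow> 'a) \<Rightarrow> ('a \<Rightarrow> 'a \<Rightarrow> 'a) \<Rightarrow> ('a \<Rightarrow> 'a)
    \<Rightarrow> nat \<Rightarrow> 'a \<Rightarrow> 'a \<Rightarrow> nat \<Rightarrow> 'a" where
  "hom_s scale br al p x y = poly_coeffs scale p (\<lambda>k. hom_chain br al (scale k x + y) x (p - 1))"

definition hom_eta :: "('f::field \<Rightarrow> 'a::comm_monoid_add \<Rightarrow> 'a) \<Rightarrow> ('a \<Rightarrow> 'a \<Rightarrow> 'a) \<Rightarrow> ('a \<Rightarrow> 'a)
    \<Rightarrow> ('a \<Rightarrow> 'a \<Rightarrow> 'f) \<Rightarrow> ('a \<Rightarrow> 'a) \<Rightarrow> nat \<Rightarrow> 'a \<Rightarrow> 'a \<Rightarrow> nat \<Rightarrow> 'f" where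
  "hom_eta scale br al B D p u v = poly_coeffs (*) p
     (\<lambda>k. B (D ((al ^^ (p - 2)) (scale k u + v))) (hom_chain br al (scale k u + v) u (p - 2)))"

definition bilinear_map :: "('f::field \<Rightarrow> 'a::ab_group_add \<Rightarrow> 'a) \<Rightarrow> ('f \<Rightarrow> 'b::ab_group_add \<Rightarrow> 'b)
    \<Rightarrow> ('a \<Rightarrow> 'a \<Rightarrow> 'b) \<Rightarrow> bool" where
  "bilinear_map s1 s2 f \<longleftrightarrow> (\<forall>x. Vector_Spaces.linear s1 s2 (f x)) \<and> (\<forall>y. Vector_Spaces.linear s1 s2 (\<lambda>x. f x y))"

definition hom_lie_algebra :: "('f::field \<Rightarrow> 'a::ab_group_add \<Rightarrow> 'a) \<Rightarrow> ('a \<Rightarrow> 'a \<Rightarrow> 'a) \<Rightarrow> ('a \<Rightarrow> 'a) \<Rightarrow> bool" where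
  "hom_lie_algebra scale br al \<longleftrightarrow> vector_space scale \<and> bilinear_map scale scale br \<and> Vector_Spaces.linear scale scale al \<and>
     (\<forall>x y. br x y = - br y x) \<and>
     (\<forall>x y z. br (al x) (br y z) + br (al y) (br z x) + br (al z) (br x y) = 0) \<and>
     (\<forall>x y. al (br x y) = br (al x) (al y))"

definition involutive_quadratic_hom_lie :: "('f::field \<Rightarrow> 'a::ab_group_add \<Rightarrow> 'a) \<Rightarrow> ('a \<Rightarrow> 'a \<Rightarrow> 'a)
    \<Rightarrow> ('a \<Rightarrow> 'a) \<Rightarrow> ('a \<Rightarrow> 'a \<Rightarrow> 'f) \<Rightarrow> bool" where
  "involutive_quadratic_hom_lie scale br al B \<longleftrightarrow> hom_lie_algebra scale br al \<and>
     (\<forall>x. al (al x) = x) \<and>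
     bilinear_map scale (*) B \<and> (\<forall>x y. B x y = B y x) \<and>
     (\<forall>x. (\<forall>y. B x y = 0) \<longrightarrow> x = 0) \<and>
     (\<forall>x y z. B (br x y) z = B x (br y z)) \<and>
     (\<forall>x y. B (al x) y = B x (al y))"

definition hom_der :: "('f::field \<Rightarrow> 'a::ab_group_add \<Rightarrow> 'a) \<Rightarrow> ('a \<Rightarrow> 'a \<Rightarrow> 'a) \<Rightarrow> ('a \<Rightarrow> 'a) \<Rightarrow> ('a \<Rightarrow> 'a) set" where
  "hom_der scale br al = {D. Vector_Spaces.linear scale scale D \<and> (\<forall>x. D (al x) = al (D x)) \<and>
     (\<forall>x y. D (br x y) = br (D x) (al y) + br (al x) (D y))}"

(* L = F e* + V + F e, encoded as triples (a, x, b) = a e* + x + b e *)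
definition L_scale :: "('f::field \<Rightarrow> 'v \<Rightarrow> 'v) \<Rightarrow> 'f \<Rightarrow> 'f \<times> 'v \<times> 'f \<Rightarrow> 'f \<times> 'v \<times> 'f" where
  "L_scale smul c w = (case w of (a, x, b) \<Rightarrow> (c * a, smul c x, c * b))"

definition L_br :: "('f::field \<Rightarrow> 'v::ab_group_add \<Rightarrow> 'v) \<Rightarrow> ('v \<Rightarrow> 'v \<Rightarrow> 'v) \<Rightarrow> ('v \<Rightarrow> 'v \<Rightarrow> 'f) \<Rightarrow> ('v \<Rightarrow> 'v)
    \<Rightarrow> 'f \<times> 'v \<times> 'f \<Rightarrow> 'f \<times> 'v \<times> 'f \<Rightarrow> 'f \<times> 'v \<times> 'f" where
  "L_br smul brV B D w w' = (case w of (a, x, b) \<Rightarrow> case w' of (a', x', b') \<Rightarrow>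
     (0, brV x x' + smul a (D x') - smul a' (D x), B (D x) x'))"

definition L_alpha :: "('f::field \<Rightarrow> 'v::ab_group_add \<Rightarrow> 'v) \<Rightarrow> ('v \<Rightarrow> 'v) \<Rightarrow> ('v \<Rightarrow> 'v \<Rightarrow> 'f) \<Rightarrow> 'v \<Rightarrow> 'f \<Rightarrow> 'f
    \<Rightarrow> 'f \<times> 'v \<times> 'f \<Rightarrow> 'f \<times> 'v \<times> 'f" where
  "L_alpha smul alV B x0 lam lam0 w = (case w of (a, x, b) \<Rightarrow>
     (lam * a, alV x + smul a x0, B x0 x + a * lam0 + lam * b))"

end

theory Submission
  imports Defs
begin


lemma alg_closed_infinite: "infinite (UNIV :: 'a::alg_closed_field set)"
proof
  assume fin: "finite (UNIV :: 'a set)"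
  define q :: "'a poly" where "q = (\<Prod>a\<in>UNIV. [:-a, 1:])"
  have dq: "degree q = card (UNIV :: 'a set)"
    unfolding q_def by (subst degree_prod_eq_sum_degree) auto
  have "card (UNIV :: 'a set) > 0" using fin by (simp add: finite_UNIV_card_ge_0)
  hence "degree (q + 1) > 0" using dq by (simp add: degree_add_eq_left)
  then obtain x where "poly (q + 1) x = 0" using alg_closed_imp_poly_has_root by blast
  moreover have "poly q x = 0" unfolding q_def poly_prod using fin
    by (intro prod_zero) auto
  ultimately show False by simp
qed

lemma scalar_unique:
  fixes d :: "nat \<Rightarrow> 'f::field"
  assumes inf: "infinite (UNIV::'f set)" and h: "\<forall>k. (\<Sum>j<n. k^j * d j) = 0" and j: "j < n"
  shows "d j = 0"
proof -
  define q where "q = (\<Sum>j<n. monom (d j) j)"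
  have "poly q k = 0" for k using h by (simp add: q_def poly_sum poly_monom mult.commute)
  hence "q = 0" using poly_roots_finite[of q] inf by (metis (mono_tags) UNIV_I mem_Collect_eq subsetI finite_subset)
  hence "coeff q j = 0" by simp
  moreover have "coeff q j = d j" unfolding q_def coeff_sum coeff_monom using j
    by (simp add: sum.delta_remove)
  ultimately show ?thesis by simp
qed



lemma vec_unique:
  fixes s :: "'f::field \<Rightarrow> 'v::ab_group_add \<Rightarrow> 'v"
  assumes vs: "vector_space s" and inf: "infinite (UNIV::'f::field set)"
    and h: "\<forall>k. (\<Sum>j<n. s (k^j) (d j)) = (0::'v::ab_group_add)" and j: "j < n"
  shows "d j = 0"
proof -
  interpret vector_space s by (fact vs)
  obtain Bs where Bi: "independent Bs" and Bsp: "UNIV \<subseteq> span Bs"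
    using basis_exists[of UNIV] by blast
  have spB: "span Bs = UNIV" using Bsp by auto
  have r0: "representation Bs (d j) b = 0" for b
  proof -
    have lin: "Vector_Spaces.linear s (*) (\<lambda>v. representation Bs v b)"
      by (rule linear_representation[OF Bi spB])
    have "\<forall>k. (\<Sum>j<n. k^j * representation Bs (d j) b) = 0"
    proof
      fix k
      have "(\<Sum>j<n. k^j * representation Bs (d j) b) = representation Bs (\<Sum>j<n. s (k^j) (d j)) b"
      proof -
        have sc: "\<And>c x. representation Bs (s c x) b = c * representation Bs x b"
          using lin unfolding Vector_Spaces.linear_iff by blast
        show ?thesis by (simp add: sc module_hom.sum[OF linear_iff_module_hom[THEN iffD1, OF lin]])
      qed
      also have "\<dots> = 0" using h by (simp add: representation_zero)
      finally show "(\<Sum>j<n. k^j * representation Bs (d j) b) = 0" .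
    qed
    thus ?thesis using scalar_unique[OF inf _ j, of "\<lambda>j. representation Bs (d j) b"] by simp
  qed
  have "d j = (\<Sum>b | representation Bs (d j) b \<noteq> 0. s (representation Bs (d j) b) b)"
    using sum_nonzero_representation_eq[OF Bi, of "d j"] spB by simp
  also have "\<dots> = 0" using r0 by simp
  finally show ?thesis .
qed

definition PC where "PC s p F c \<longleftrightarrow> (\<forall>i. i \<notin> {1..p-1} \<longrightarrow> c i = 0) \<and>
      (\<forall>k. F k = (\<Sum>i=1..p-1. s (of_nat i * k ^ (i - 1)) (c i)))"

lemma reidx: "(\<Sum>i=1..m. g i) = (\<Sum>j<m. g (Suc j))"
  by (induction m) auto

lemma PC_sum: assumes vs: "vector_space s"
  shows "(\<Sum>i=1..p-1. s (of_nat i * k ^ (i - 1)) (c i)) = (\<Sum>j<p-1. s (k^j) (s (of_nat (Suc j)) (c (Suc j))))"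
proof -
  interpret vector_space s by (fact vs)
  show ?thesis unfolding reidx by (simp add: scale_scale mult.commute)
qed

lemma PC_val:
  fixes s :: "'f::field \<Rightarrow> 'v::ab_group_add \<Rightarrow> 'v"
  assumes vs: "vector_space s" and inf: "infinite (UNIV::'f::field set)"
    and nz: "\<forall>i\<in>{1..p-1}. (of_nat i :: 'f) \<noteq> 0"
    and F: "\<forall>k. F k = (\<Sum>j<p-1. s (k^j) (a j))"
    and i: "1 \<le> i" "i \<le> p - 1"
  shows "poly_coeffs s p F i = s (inverse (of_nat i)) (a (i - 1))"
proof -
  interpret vector_space s by (fact vs)
  define c0 where "c0 i = (if i \<in> {1..p-1} then s (inverse (of_nat i)) (a (i - 1)) else 0)" for i
  have P0: "PC s p F c0"
    unfolding PC_def
  proof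
    show "\<forall>i. i \<notin> {1..p - 1} \<longrightarrow> c0 i = 0" by (simp add: c0_def)
    show "\<forall>k. F k = (\<Sum>i = 1..p - 1. s (of_nat i * k ^ (i - 1)) (c0 i))"
    proof
      fix k
      have "(\<Sum>i = 1..p - 1. s (of_nat i * k ^ (i - 1)) (c0 i)) = (\<Sum>j<p-1. s (k^j) (s (of_nat (Suc j)) (c0 (Suc j))))"
        by (rule PC_sum[OF vs])
      also have "\<dots> = (\<Sum>j<p-1. s (k^j) (a j))"
      proof (rule sum.cong[OF refl])
        fix j assume "j \<in> {..<p-1}"
        hence "Suc j \<in> {1..p-1}" by auto
        hence "(of_nat (Suc j) :: 'f) \<noteq> 0" using nz by blast
        hence inv: "of_nat (Suc j) * inverse (of_nat (Suc j)) = (1::'f)" by simp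
        show "s (k^j) (s (of_nat (Suc j)) (c0 (Suc j))) = s (k^j) (a j)"
          proof -
          have "c0 (Suc j) = s (inverse (of_nat (Suc j))) (a j)"
            using \<open>Suc j \<in> {1..p-1}\<close> by (simp add: c0_def del: of_nat_Suc)
          thus ?thesis by (simp only: scale_scale mult.assoc inv mult_1_right)
        qed
      qed
      finally show "F k = (\<Sum>i = 1..p - 1. s (of_nat i * k ^ (i - 1)) (c0 i))" using F by simp
    qed
  qed
  have U: "c = c0" if Pc: "PC s p F c" for c
  proof
    fix i
    show "c i = c0 i"
    proof (cases "i \<in> {1..p-1}")
      case False thus ?thesis using Pc P0 unfolding PC_def by simp
    next
      case True
      define d where "d j = s (of_nat (Suc j)) (c (Suc j) - c0 (Suc j))" for j
      have "\<forall>k. (\<Sum>j<p-1. s (k^j) (d j)) = 0"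
      proof
        fix k
        have "(\<Sum>j<p-1. s (k^j) (d j)) = (\<Sum>j<p-1. s (k^j) (s (of_nat (Suc j)) (c (Suc j)))) - (\<Sum>j<p-1. s (k^j) (s (of_nat (Suc j)) (c0 (Suc j))))"
          by (simp add: d_def scale_right_diff_distrib sum_subtractf)
        also have "\<dots> = F k - F k" using Pc P0 unfolding PC_def PC_sum[OF vs] by metis
        finally show "(\<Sum>j<p-1. s (k^j) (d j)) = 0" by simp
      qed
      hence "d (i - 1) = 0" using vec_unique[OF vs inf] True by force
      moreover have "(of_nat i :: 'f) \<noteq> 0" using nz True by blast
      ultimately show ?thesis using True by (simp add: d_def)
    qed
  qed
  have "poly_coeffs s p F = c0" unfolding poly_coeffs_def PC_def[symmetric]
    using P0 U by blast
  thus ?thesis using i by (simp add: c0_def)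
qed



lemma vs_of_lin: "Vector_Spaces.linear s1 s2 g \<Longrightarrow> vector_space s2"
  unfolding Vector_Spaces.linear_iff by blast
lemma vs_of_lin1: "Vector_Spaces.linear s1 s2 g \<Longrightarrow> vector_space s1"
  unfolding Vector_Spaces.linear_iff by blast

lemma poly_step:
  fixes s1 :: "'f::field \<Rightarrow> 'v::ab_group_add \<Rightarrow> 'v" and s2 :: "'f \<Rightarrow> 'w::ab_group_add \<Rightarrow> 'w"
  assumes bl: "bilinear_map s1 s2 f" and G: "\<forall>k. G k = (\<Sum>j<m. s1 (k^j) (a j))"
  shows "\<exists>b. \<forall>k. f (s1 k u + v) (G k) = (\<Sum>j<Suc m. s2 (k^j) (b j))"
proof -
  have l1: "Vector_Spaces.linear s1 s2 (\<lambda>x. f x y)" for y using bl unfolding bilinear_map_def by blast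
  have l2: "Vector_Spaces.linear s1 s2 (f x)" for x using bl unfolding bilinear_map_def by blast
  interpret v2: vector_space s2 using vs_of_lin[OF l2] .
  have a1: "f (x + x') y = f x y + f x' y" "f (s1 c x) y = s2 c (f x y)" for x x' y c
    using l1[of y] unfolding Vector_Spaces.linear_iff by blast+
  have sm: "f x (sum g S) = (\<Sum>j\<in>S. f x (g j))" for x g S
    by (rule module_hom.sum[OF linear_iff_module_hom[THEN iffD1, OF l2]])
  have a2: "f x (s1 c y) = s2 c (f x y)" for x y c
    using l2[of x] unfolding Vector_Spaces.linear_iff by blast
  define b where "b j = (if j = 0 then 0 else f u (a (j-1))) + (if j < m then f v (a j) else 0)" for j
  have "f (s1 k u + v) (G k) = (\<Sum>j<Suc m. s2 (k^j) (b j))" for k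
  proof -
    have "f (s1 k u + v) (G k) = s2 k (f u (G k)) + f v (G k)" by (simp add: a1)
    also have "f u (G k) = (\<Sum>j<m. s2 (k^j) (f u (a j)))" using G by (simp add: sm a2)
    also have "f v (G k) = (\<Sum>j<m. s2 (k^j) (f v (a j)))" using G by (simp add: sm a2)
    also have "s2 k (\<Sum>j<m. s2 (k^j) (f u (a j))) = (\<Sum>j<m. s2 (k^Suc j) (f u (a j)))"
      by (simp add: v2.scale_sum_right v2.scale_scale)
    finally have e1: "f (s1 k u + v) (G k) = (\<Sum>j<m. s2 (k^Suc j) (f u (a j))) + (\<Sum>j<m. s2 (k^j) (f v (a j)))" .
    have "(\<Sum>j<Suc m. s2 (k^j) (b j)) = (\<Sum>j<Suc m. s2 (k^j) (if j = 0 then 0 else f u (a (j-1))))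
        + (\<Sum>j<Suc m. s2 (k^j) (if j < m then f v (a j) else 0))"
      by (simp add: b_def v2.scale_right_distrib sum.distrib)
    also have "(\<Sum>j<Suc m. s2 (k^j) (if j = 0 then 0 else f u (a (j-1)))) = (\<Sum>j<m. s2 (k^Suc j) (f u (a j)))"
      by (subst sum.lessThan_Suc_shift) simp
    also have "(\<Sum>j<Suc m. s2 (k^j) (if j < m then f v (a j) else 0)) = (\<Sum>j<m. s2 (k^j) (f v (a j)))"
      by simp
    finally have e2: "(\<Sum>j<Suc m. s2 (k^j) (b j)) = (\<Sum>j<m. s2 (k^Suc j) (f u (a j))) + (\<Sum>j<m. s2 (k^j) (f v (a j)))" .
    show ?thesis using e1 e2 by simp
  qed
  thus ?thesis by blast
qed

lemma pow_lin:
  assumes "Vector_Spaces.linear s s al"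
  shows "(al^^n) (s k x + y) = s k ((al^^n) x) + (al^^n) y"
proof (induction n)
  case 0 then show ?case by simp
next
  case (Suc n) then show ?case using assms unfolding Vector_Spaces.linear_iff by simp
qed

lemma chain_poly:
  fixes s :: "'f::field \<Rightarrow> 'v::ab_group_add \<Rightarrow> 'v"
  assumes hl: "hom_lie_algebra s br al" and uu: "br u u = 0" and n: "1 \<le> n"
  shows "\<exists>a. \<forall>k. hom_chain br al (s k u + v) u n = (\<Sum>j<n. s (k^j) (a j))"
  using n
proof (induction n rule: nat_induct_at_least)
  case base
  have bl: "bilinear_map s s br" and al: "Vector_Spaces.linear s s al" using hl unfolding hom_lie_algebra_def by blast+
  have l1: "Vector_Spaces.linear s s (\<lambda>x. br x y)" for y using bl unfolding bilinear_map_def by blast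
  interpret vector_space s using vs_of_lin[OF al] .
  have "hom_chain br al (s k u + v) u 1 = br v u" for k
    using l1[of u] uu unfolding Vector_Spaces.linear_iff by simp
  thus ?case by (intro exI[of _ "\<lambda>_. br v u"]) simp
next
  case (Suc n)
  have bl: "bilinear_map s s br" and al: "Vector_Spaces.linear s s al" using hl unfolding hom_lie_algebra_def by blast+
  obtain a where a: "\<forall>k. hom_chain br al (s k u + v) u n = (\<Sum>j<n. s (k^j) (a j))" using Suc by blast
  obtain b where b: "\<forall>k. br (s k ((al^^n) u) + (al^^n) v) (hom_chain br al (s k u + v) u n) = (\<Sum>j<Suc n. s (k^j) (b j))"
    using poly_step[OF bl, where G="\<lambda>k. hom_chain br al (s k u + v) u n" and m=n and a=a and u="(al^^n) u" and v="(al^^n) v"] a by blast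
  show ?case using b by (intro exI[of _ b]) (simp add: pow_lin[OF al])
qed

lemma vs_field: "vector_space ((*) :: 'f::field \<Rightarrow> 'f \<Rightarrow> 'f)"
  by unfold_locales (simp_all add: algebra_simps)

lemma L_scale_simp: "L_scale smul c (a, x, b) = (c * a, smul c x, c * b)"
  by (simp add: L_scale_def)

lemma vs_L:
  assumes "vector_space (smul :: 'f::field \<Rightarrow> 'v::ab_group_add \<Rightarrow> 'v)"
  shows "vector_space (L_scale smul)"
proof -
  interpret vector_space smul by fact
  show ?thesis
    by unfold_locales (auto simp: L_scale_def algebra_simps scale_right_distrib scale_left_distrib split: prod.split)
qed



lemma Lal_pow:
  assumes vs: "vector_space smul"
  shows "\<exists>b'. ((L_alpha smul alV B x0 lam lam0)^^n) (0, z, b) = (0, (alV^^n) z, b')"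
proof (induction n)
  case 0 then show ?case by simp
next
  case (Suc n)
  interpret vector_space smul by (fact vs)
  from Suc obtain b' where h: "((L_alpha smul alV B x0 lam lam0)^^n) (0, z, b) = (0, (alV^^n) z, b')" by blast
  show ?case by (simp only: funpow.simps comp_apply h) (simp add: L_alpha_def)
qed

lemma Lchain:
  assumes vs: "vector_space smul"
  shows "hom_chain (L_br smul brV B D) (L_alpha smul alV B x0 lam lam0) (0, z, 0) (0, u, 0) (Suc n)
     = (0, hom_chain brV alV z u (Suc n), B (D ((alV^^n) z)) (hom_chain brV alV z u n))"
proof (induction n)
  case 0
  interpret vector_space smul by (fact vs)
  show ?case by (simp add: L_br_def)
next
  case (Suc n)
  interpret vector_space smul by (fact vs)
  obtain b' where h: "((L_alpha smul alV B x0 lam lam0)^^Suc n) (0, z, 0) = (0, (alV^^Suc n) z, b')"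
    using Lal_pow[OF vs] by blast
  have "hom_chain (L_br smul brV B D) (L_alpha smul alV B x0 lam lam0) (0, z, 0) (0, u, 0) (Suc (Suc n))
     = L_br smul brV B D (0, (alV^^Suc n) z, b') (0, hom_chain brV alV z u (Suc n), B (D ((alV^^n) z)) (hom_chain brV alV z u n))"
    by (simp only: hom_chain.simps(2)[of _ _ _ _ "Suc n"] h Suc)
  also have "\<dots> = (0, brV ((alV^^Suc n) z) (hom_chain brV alV z u (Suc n)), B (D ((alV^^Suc n) z)) (hom_chain brV alV z u (Suc n)))"
    by (simp add: L_br_def del: funpow.simps hom_chain.simps)
  finally show ?case by (subst hom_chain.simps(2)[of brV alV z u "Suc n"])

qed

theorem lemma4p3:
  fixes smul :: "'f::alg_closed_field \<Rightarrow> 'v::ab_group_add \<Rightarrow> 'v"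
    and brV :: "'v \<Rightarrow> 'v \<Rightarrow> 'v" and alV D :: "'v \<Rightarrow> 'v" and B :: "'v \<Rightarrow> 'v \<Rightarrow> 'f"
    and x0 u v :: 'v and lam lam0 :: 'f and p i :: nat
  assumes "CHAR('f) = p" and "p > 2"
    and "involutive_quadratic_hom_lie smul brV alV B"
    and "D \<in> hom_der smul brV alV"
    and "\<forall>x y. B (D x) y + B x (D y) = 0"
    and "\<forall>x. smul lam (D x) + brV x0 x = D x"
    and "alV (D x0) = - D x0"
    and "\<forall>x. alV (D (D x)) - D (D (alV x)) = brV (D x0) x"
    and "1 \<le> i" and "i \<le> p - 1"
  shows "hom_s (L_scale smul) (L_br smul brV B D) (L_alpha smul alV B x0 lam lam0) p (0, u, 0) (0, v, 0) i
         = (0, hom_s smul brV alV p u v i, hom_eta smul brV alV B D p u v i)"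
proof -
  note ch = assms(1) and p2 = assms(2) and iq = assms(3) and der = assms(4) and i = assms(9,10)
  have hl: "hom_lie_algebra smul brV alV" using iq unfolding involutive_quadratic_hom_lie_def by blast
  have bB: "bilinear_map smul (*) B" using iq unfolding involutive_quadratic_hom_lie_def by blast
  have vs: "vector_space smul" and alin: "Vector_Spaces.linear smul smul alV"
    and skew: "\<forall>x y. brV x y = - brV y x"
    using hl unfolding hom_lie_algebra_def by blast+
  have Dlin: "Vector_Spaces.linear smul smul D" using der unfolding hom_der_def by blast
  interpret vector_space smul by (fact vs)
  have inf: "infinite (UNIV :: 'f set)" by (rule alg_closed_infinite)
  have nz: "\<forall>i\<in>{1..p-1}. (of_nat i :: 'f) \<noteq> 0"
  proof
    fix j assume "j \<in> {1..p-1}"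
    hence "0 < j" "j < p" using p2 by auto
    hence "\<not> p dvd j" by (auto dest: dvd_imp_le)
    thus "(of_nat j :: 'f) \<noteq> 0" using ch by (simp add: of_nat_eq_0_iff_char_dvd)
  qed
  have two: "(2::'f) \<noteq> 0"
  proof -
    have "\<not> p dvd 2" using p2 by (auto dest: dvd_imp_le)
    hence "(of_nat 2 :: 'f) \<noteq> 0" using ch by (simp only: of_nat_eq_0_iff_char_dvd) simp
    thus ?thesis by simp
  qed
  have uu: "brV u u = 0"
  proof -
    have h: "brV u u = - brV u u" using skew by blast
    have "brV u u + brV u u = 0" by (subst (2) h) simp
    moreover have "smul 2 (brV u u) = smul 1 (brV u u) + smul 1 (brV u u)"
      by (metis one_add_one scale_left_distrib)
    ultimately have "smul 2 (brV u u) = 0" by simp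
    thus ?thesis using two by simp
  qed
  have n1: "1 \<le> p - 1" and n2: "1 \<le> p - 2" using p2 by auto
  obtain aV where aV: "\<forall>k. hom_chain brV alV (smul k u + v) u (p-1) = (\<Sum>j<p-1. smul (k^j) (aV j))"
    using chain_poly[OF hl uu n1, where v=v] by blast
  obtain a2 where a2: "\<forall>k. hom_chain brV alV (smul k u + v) u (p-2) = (\<Sum>j<p-2. smul (k^j) (a2 j))"
    using chain_poly[OF hl uu n2, where v=v] by blast
  have Dal: "D ((alV^^(p-2)) (smul k u + v)) = smul k (D ((alV^^(p-2)) u)) + D ((alV^^(p-2)) v)" for k
    using Dlin unfolding pow_lin[OF alin] Vector_Spaces.linear_iff by simp
  obtain aE where aE0: "\<forall>k. B (smul k (D ((alV^^(p-2)) u)) + D ((alV^^(p-2)) v)) (hom_chain brV alV (smul k u + v) u (p-2))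
     = (\<Sum>j<Suc (p-2). k^j * aE j)"
    using poly_step[OF bB, where G="\<lambda>k. hom_chain brV alV (smul k u + v) u (p-2)" and m="p-2" and a=a2
       and u="D ((alV^^(p-2)) u)" and v="D ((alV^^(p-2)) v)"] a2 by blast
  have sp: "Suc (p-2) = p - 1" using p2 by simp
  have aE: "\<forall>k. B (D ((alV^^(p-2)) (smul k u + v))) (hom_chain brV alV (smul k u + v) u (p-2))
     = (\<Sum>j<p-1. k^j * aE j)" using aE0 unfolding Dal sp by simp
  have FL: "hom_chain (L_br smul brV B D) (L_alpha smul alV B x0 lam lam0) (L_scale smul k (0, u, 0) + (0, v, 0)) (0, u, 0) (p - 1)
      = (\<Sum>j<p-1. L_scale smul (k^j) (0, aV j, aE j))" for k
  proof -
    have e: "L_scale smul k (0, u, 0) + (0, v, 0) = (0, smul k u + v, 0)" by (simp add: L_scale_simp)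
    have pm: "p - 1 = Suc (p - 2)" "p - 1 - 1 = p - 2" using p2 by auto
    have "hom_chain (L_br smul brV B D) (L_alpha smul alV B x0 lam lam0) (L_scale smul k (0, u, 0) + (0, v, 0)) (0, u, 0) (p - 1)
       = (0, hom_chain brV alV (smul k u + v) u (p-1), B (D ((alV^^(p-2)) (smul k u + v))) (hom_chain brV alV (smul k u + v) u (p-2)))"
      unfolding e pm(1) Lchain[OF vs] by (rule refl)
    also have "\<dots> = (\<Sum>j<p-1. L_scale smul (k^j) (0, aV j, aE j))"
    proof (rule prod_eqI)
      show "fst (0::'f, hom_chain brV alV (smul k u + v) u (p-1), B (D ((alV^^(p-2)) (smul k u + v))) (hom_chain brV alV (smul k u + v) u (p-2)))
          = fst (\<Sum>j<p-1. L_scale smul (k^j) (0, aV j, aE j))"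
        by (simp add: fst_sum L_scale_simp)
      show "snd (0::'f, hom_chain brV alV (smul k u + v) u (p-1), B (D ((alV^^(p-2)) (smul k u + v))) (hom_chain brV alV (smul k u + v) u (p-2)))
          = snd (\<Sum>j<p-1. L_scale smul (k^j) (0, aV j, aE j))"
      proof (rule prod_eqI)
        show "fst (snd (0::'f, hom_chain brV alV (smul k u + v) u (p-1), B (D ((alV^^(p-2)) (smul k u + v))) (hom_chain brV alV (smul k u + v) u (p-2))))
          = fst (snd (\<Sum>j<p-1. L_scale smul (k^j) (0, aV j, aE j)))"
          using aV by (simp only: snd_sum fst_sum L_scale_simp fst_conv snd_conv)
        show "snd (snd (0::'f, hom_chain brV alV (smul k u + v) u (p-1), B (D ((alV^^(p-2)) (smul k u + v))) (hom_chain brV alV (smul k u + v) u (p-2))))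
          = snd (snd (\<Sum>j<p-1. L_scale smul (k^j) (0, aV j, aE j)))"
          using aE by (simp only: snd_sum L_scale_simp fst_conv snd_conv)
      qed
    qed
    finally show ?thesis .
  qed
  have r1: "hom_s (L_scale smul) (L_br smul brV B D) (L_alpha smul alV B x0 lam lam0) p (0, u, 0) (0, v, 0) i
      = L_scale smul (inverse (of_nat i)) (0, aV (i-1), aE (i-1))"
    unfolding hom_s_def by (rule PC_val[OF vs_L[OF vs] inf nz _ i]) (use FL in simp)
  have r2: "hom_s smul brV alV p u v i = smul (inverse (of_nat i)) (aV (i-1))"
    unfolding hom_s_def by (rule PC_val[OF vs inf nz _ i]) (use aV in simp)
  have r3: "hom_eta smul brV alV B D p u v i = inverse (of_nat i) * aE (i-1)"
    unfolding hom_eta_def by (rule PC_val[OF vs_field inf nz _ i]) (use aE in simp)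
  show ?thesis unfolding r1 r2 r3 by (simp add: L_scale_simp)
qed

end
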